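(* Let $n\in\mathbb{N}$, $a_1,\dots,a_n\in\mathbb{N}$, and $s_0,t_0\in\mathbb{N}$ with $s_0<t_0$ and $\gcd(s_0,t_0)=1$; put $w_0=\frac{s_0}{t_0}$. Then there are unique $w_1,\dots,w_n\in\mathbb{Q}\cap(0,1)$ with $a_jw_j+w_{j-1}=1$ for $j=1,\dots,n$. Write $w_j=\frac{s_j}{t_j}$ with $s_j,t_j\in\mathbb{N}$, $\gcd(s_j,t_j)=1$, and let $\beta_j=\gcd(t_{j-1}-s_{j-1},a_j)$ and $\alpha_j=a_j/\beta_j$ for $j=1,\dots,n$. Then for $j=1,\dots,n$ $$s_j=\frac{\rho(a_{j-1},\dots,a_1)\cdot t_0+(-1)^js_0}{\beta_j\cdots\beta_1},\qquad t_j=\alpha_jt_{j-1}=\alpha_j\cdots\alpha_1\cdot t_0,$$ and $$\prod_{j=1}^n\left(\frac1{s_j}\Lambda_{t_j}-\Lambda_1\right)=(-1)^n\Lambda_1+\sum_{j=1}^n(-1)^{n-j}\frac{\beta_j\cdots\beta_1}{t_0-s_0}\Lambda_{t_j}=(-1)^nE_1+\sum_{j=1}^n(-1)^{n-j}\frac{a_j\cdots a_1}{1-w_0}E_{t_j},$$ $$\prod_{j=1}^n\left(\frac1{w_j}-1\right)=\frac{\rho(a_n,a_{n-1},\dots,a_1)+(-1)^{n-1}w_0}{1-w_0}.$$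
   Context: $\rho(x_1,\dots,x_k)=x_1\cdots x_k-x_2\cdots x_k+\dots+(-1)^{k-1}x_k+(-1)^k$, with $\rho(\emptyset)=1$. $S^{UR}$ is the set of roots of unity and $\mathbb{Q}\langle S^{UR}\rangle$ its group ring over $\mathbb{Q}$ (elements $\sum b_j\langle\zeta_j\rangle$, product $\langle\zeta_1\rangle\langle\zeta_2\rangle=\langle\zeta_1\zeta_2\rangle$). $\Lambda_m=\sum_{a=0}^{m-1}\langle e^{2\pi i a/m}\rangle$ and $E_m=\frac1m\Lambda_m$. *)

theory Defs
  imports Complex_Main "HOL-Library.Function_Algebras"
begin

definition rho :: "int list \<Rightarrow> int" where
  "rho xs = (\<Sum>i<length xs. (-1)^i * prod_list (drop i xs)) + (-1)^(length xs)"

text \<open>The group ring Q<S^UR>: elements are finitely supported functions from the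
  roots of unity (as complex numbers) to rat; sums are pointwise, the product is the
  convolution induced by the multiplication of roots of unity.\<close>
type_synonym grp_ring = "complex \<Rightarrow> rat"

definition gr_basis :: "complex \<Rightarrow> grp_ring" ("\<langle>_\<rangle>") where
  "gr_basis \<zeta> = (\<lambda>z. if z = \<zeta> then 1 else 0)"

definition gr_smult :: "rat \<Rightarrow> grp_ring \<Rightarrow> grp_ring" where
  "gr_smult c f = (\<lambda>z. c * f z)"

definition gr_mult :: "grp_ring \<Rightarrow> grp_ring \<Rightarrow> grp_ring" where
  "gr_mult f g = (\<lambda>z. \<Sum>x\<in>{x. f x \<noteq> 0}. f x * g (z / x))"

fun gr_prod :: "(nat \<Rightarrow> grp_ring) \<Rightarrow> nat \<Rightarrow> grp_ring" where
  "gr_prod F 0 = gr_basis 1"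
| "gr_prod F (Suc k) = gr_mult (gr_prod F k) (F (Suc k))"

definition Lambda :: "nat \<Rightarrow> grp_ring" where
  "Lambda m = (\<Sum>a<m. gr_basis (exp (2 * of_real pi * \<i> * of_nat a / of_nat m)))"

definition E :: "nat \<Rightarrow> grp_ring" where
  "E m = gr_smult (1 / of_nat m) (Lambda m)"

end

theory Submission
  imports Defs
begin



definition ch :: "nat \<Rightarrow> grp_ring" where
  "ch m = (\<lambda>z. if z ^ m = 1 then 1 else 0)"

lemma fun_sum_apply: "(sum F A) x = (\<Sum>j\<in>A. F j x)"
  by (induction A rule: infinite_finite_induct) auto

lemma exp_cis: "exp (2 * of_real pi * \<i> * of_nat a / of_nat m) = cis (2 * pi * real a / real m)"
  by (simp add: cis_conv_exp mult_ac)

lemma Lambda_ch: assumes "m > 0" shows "Lambda m = ch m"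
proof
  fix z
  have "Lambda m z = (\<Sum>a<m. (if z = cis (2 * pi * real a / real m) then 1 else 0))"
    unfolding Lambda_def fun_sum_apply gr_basis_def exp_cis by (rule sum.cong) auto
  also have "\<dots> = (\<Sum>u\<in>{u. u^m = 1}. (if z = u then 1 else 0))"
    using bij_betw_roots_unity[OF assms] by (rule sum.reindex_bij_betw)
  also have "\<dots> = ch m z"
    using finite_roots_unity[of m] assms unfolding ch_def by (subst sum.delta') auto
  finally show "Lambda m z = ch m z" .
qed

lemma E_ch: assumes "m > 0" shows "E m = gr_smult (1 / of_nat m) (ch m)"
  using Lambda_ch[OF assms] by (simp add: E_def)

lemma basis1: "gr_basis 1 = ch 1"
  by (auto simp: gr_basis_def ch_def)

definition supp_in :: "grp_ring \<Rightarrow> nat \<Rightarrow> bool" where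
  "supp_in f m = (\<forall>z. z ^ m \<noteq> 1 \<longrightarrow> f z = 0)"

lemma gr_mult_eq:
  assumes "m > 0" "supp_in f m"
  shows "gr_mult f g z = (\<Sum>x\<in>{x. x^m = 1}. f x * g (z / x))"
  unfolding gr_mult_def
  by (rule sum.mono_neutral_left) (use assms finite_roots_unity[of m] in \<open>auto simp: supp_in_def power_0_left\<close>)

lemma mult_ch:
  assumes "m > 0" "supp_in f m"
  shows "gr_mult f (ch m) = gr_smult (\<Sum>x\<in>{x. x^m = 1}. f x) (ch m)"
proof
  fix z
  have "gr_mult f (ch m) z = (\<Sum>x\<in>{x. x^m = 1}. f x * ch m z)"
    unfolding gr_mult_eq[OF assms]
    by (rule sum.cong) (auto simp: ch_def power_divide)
  then show "gr_mult f (ch m) z = gr_smult (\<Sum>x\<in>{x. x^m = 1}. f x) (ch m) z"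
    by (simp add: gr_smult_def sum_distrib_right)
qed

lemma mult_ch1:
  assumes "m > 0" "supp_in f m"
  shows "gr_mult f (ch 1) = f"
proof
  fix z
  have "gr_mult f (ch 1) z = (\<Sum>x\<in>{x. x^m = 1}. if z = x then f x else 0)"
    unfolding gr_mult_eq[OF assms]
    by (rule sum.cong) (use assms in \<open>auto simp: ch_def power_0_left\<close>)
  also have "\<dots> = f z" using assms finite_roots_unity[of m]
    by (subst sum.delta') (auto simp: supp_in_def)
  finally show "gr_mult f (ch 1) z = f z" .
qed

lemma mult_lin:
  "gr_mult f (gr_smult c g - h) = gr_smult c (gr_mult f g) - gr_mult f h"
  unfolding gr_mult_def gr_smult_def
  by (auto simp: fun_eq_iff sum_subtractf sum_distrib_left algebra_simps)

lemma mass_ch: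
  assumes "m > 0" "k dvd m"
  shows "(\<Sum>x\<in>{x::complex. x^m = 1}. ch k x) = of_nat k"
proof -
  have k: "k > 0" using assms by (auto intro: Nat.gr0I)
  have sub: "{x::complex. x^k = 1} \<subseteq> {x. x^m = 1}"
    using assms by (auto elim!: dvdE simp: power_mult)
  have "(\<Sum>x\<in>{x::complex. x^m = 1}. ch k x) = (\<Sum>x\<in>{x::complex. x^k = 1}. 1)"
    unfolding ch_def
    by (rule sum.mono_neutral_cong_right) (use finite_roots_unity[of m] assms sub in auto)
  also have "\<dots> = of_nat k" using card_roots_unity_eq[OF k] by simp
  finally show ?thesis .
qed



lemma rho_Nil: "rho [] = 1" by (simp add: rho_def)

lemma rho_Cons: "rho (x # xs) = x * prod_list xs - rho xs"
proof -
  have "rho (x # xs) = (\<Sum>i<Suc (length xs). (-1)^i * prod_list (drop i (x # xs))) + (-1)^(Suc (length xs))"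
    by (simp add: rho_def)
  also have "\<dots> = x * prod_list xs + (\<Sum>i<length xs. (-1)^(Suc i) * prod_list (drop i xs)) + (-1)^(Suc (length xs))"
    by (subst sum.lessThan_Suc_shift) simp
  also have "\<dots> = x * prod_list xs - rho xs"
    by (simp add: rho_def sum_negf)
  finally show ?thesis .
qed

lemma prod_list_rev_upt: "prod_list (map f (rev [1..<Suc j])) = (\<Prod>i=1..j. f i)"
proof -
  have "prod_list (map f (rev [1..<Suc j])) = prod_list (map f [1..<Suc j])"
    by (simp add: rev_map[symmetric])
  also have "\<dots> = (\<Prod>i=1..j. f i)"
    by (metis atLeastLessThanSuc_atLeastAtMost distinct_upt prod.distinct_set_conv_list set_upt)
  finally show ?thesis .
qed

lemma R_Suc: "rho (map (\<lambda>i. int (a i)) (rev [1..<Suc (Suc j)]))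
   = (\<Prod>i=1..Suc j. int (a i)) - rho (map (\<lambda>i. int (a i)) (rev [1..<Suc j]))"
proof -
  have eq: "rev [1..<Suc (Suc j)] = Suc j # rev [1..<Suc j]" by simp
  have "rho (map (\<lambda>i. int (a i)) (rev [1..<Suc (Suc j)]))
     = int (a (Suc j)) * (\<Prod>i=1..j. int (a i)) - rho (map (\<lambda>i. int (a i)) (rev [1..<Suc j]))"
    by (simp only: eq list.map rho_Cons prod_list_rev_upt)
  also have "int (a (Suc j)) * (\<Prod>i=1..j. int (a i)) = (\<Prod>i=1..Suc j. int (a i))"
    by (simp add: prod.cl_ivl_Suc)
  finally show ?thesis .
qed



lemma frac_unique:
  fixes s t p q :: nat
  assumes "0 < t" "0 < q" "coprime s t" "coprime p q" "(of_nat s / of_nat t :: rat) = of_nat p / of_nat q"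
  shows "s = p \<and> t = q"
proof -
  have "(of_nat (s * q) :: rat) = of_nat (p * t)"
    using assms by (simp add: field_simps)
  then have e: "s * q = p * t" by (simp only: of_nat_eq_iff)
  have "t dvd s * q" using e by simp
  then have "t dvd q" using assms(3) by (simp add: coprime_commute coprime_dvd_mult_right_iff)
  moreover have "q dvd p * t" using e by (metis dvd_triv_right)
  then have "q dvd t" using assms(4) by (simp add: coprime_commute coprime_dvd_mult_right_iff)
  ultimately have "t = q" by (rule dvd_antisym)
  with e assms(2) show ?thesis by simp
qed

lemma step_frac:
  fixes s' t' a sj tj :: nat
  assumes "0 < t'" "s' < t'" "coprime s' t'" "0 < a" "0 < tj" "coprime sj tj"
    "of_nat a * (of_nat sj / of_nat tj) + of_nat s' / of_nat t' = (1::rat)"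
  shows "sj = (t' - s') div gcd (t' - s') a \<and> tj = (a div gcd (t' - s') a) * t'"
proof -
  define g where "g = gcd (t' - s') a"
  have gpos: "0 < g" using assms(4) by (simp add: g_def)
  have gd1: "g dvd t' - s'" and gd2: "g dvd a" by (simp_all add: g_def)
  define p where "p = (t' - s') div g"
  define q where "q = (a div g) * t'"
  have "q > 0" using assms(1,4) gd2 gpos by (auto simp: q_def dvd_div_eq_0_iff)
  have cp1: "coprime p (a div g)" unfolding p_def g_def
    using assms(4) by (intro div_gcd_coprime) simp
  have "coprime (t' - s') t'"
  proof (rule coprimeI)
    fix c assume a: "c dvd t' - s'" "c dvd t'"
    then have "c dvd t' - (t' - s')" using dvd_diff_nat by blast
    then have "c dvd s'" using assms(2) by simp
    with a assms(3) show "is_unit c" using coprime_common_divisor by blast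
  qed
  then have cp2: "coprime p t'" unfolding p_def using gd1
    by (metis coprime_mult_left_iff dvd_mult_div_cancel)
  have cp: "coprime p q" unfolding q_def using cp1 cp2 by simp
  have "of_nat sj / of_nat tj = (1 - of_nat s' / of_nat t') / (of_nat a :: rat)"
    using assms(4,7) by (simp add: field_simps)
  also have "\<dots> = of_nat (t' - s') / (of_nat a * of_nat t')"
    using assms(1,2,4) by (simp add: field_simps of_nat_diff)
  also have "\<dots> = of_nat p / of_nat q"
  proof -
    have "t' - s' = p * g" using gd1 by (simp add: p_def)
    then have e1: "(of_nat (t' - s') :: rat) = of_nat p * of_nat g" by (metis of_nat_mult)
    have "a = (a div g) * g" using gd2 by simp
    then have e2: "(of_nat a :: rat) = of_nat (a div g) * of_nat g" by (metis of_nat_mult)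
    show ?thesis unfolding e1 e2 q_def using gpos by simp
  qed
  finally have "sj = p \<and> tj = q"
    by (intro frac_unique) (use assms \<open>q > 0\<close> cp in auto)
  then show ?thesis by (simp add: p_def q_def g_def)
qed

fun wseq :: "(nat \<Rightarrow> nat) \<Rightarrow> rat \<Rightarrow> nat \<Rightarrow> rat" where
  "wseq a x 0 = x"
| "wseq a x (Suc j) = (1 - wseq a x j) / of_nat (a (Suc j))"

lemma part1:
  fixes n :: nat and a :: "nat \<Rightarrow> nat" and s0 t0 :: nat
  assumes a_pos: "\<forall>j\<in>{1..n}. 1 \<le> a j"
    and s0_pos: "1 \<le> s0"
    and st0: "s0 < t0"
  shows
    "(\<exists>w :: nat \<Rightarrow> rat. w 0 = of_nat s0 / of_nat t0 \<and>
        (\<forall>j\<in>{1..n}. 0 < w j \<and> w j < 1 \<and> of_nat (a j) * w j + w (j - 1) = 1) \<and>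
        (\<forall>w' :: nat \<Rightarrow> rat. (w' 0 = of_nat s0 / of_nat t0 \<and>
            (\<forall>j\<in>{1..n}. 0 < w' j \<and> w' j < 1 \<and> of_nat (a j) * w' j + w' (j - 1) = 1))
          \<longrightarrow> (\<forall>j\<in>{1..n}. w' j = w j)))"
proof -
  define x0 :: rat where "x0 = of_nat s0 / of_nat t0"
  define W where "W = wseq a x0"
  have x0: "0 < x0" "x0 < 1" using s0_pos st0 by (auto simp: x0_def field_simps)
  have W: "j \<le> n \<Longrightarrow> 0 < W j \<and> W j < 1" for j
  proof (induction j)
    case 0 then show ?case using x0 by (simp add: W_def)
  next
    case (Suc j)
    then have "0 < 1 - W j" "1 - W j < 1" and a1: "1 \<le> a (Suc j)" using a_pos by auto
    have "1 - W j \<le> (1 - W j) * of_nat (a (Suc j))"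
      using mult_left_mono[of 1 "of_nat (a (Suc j))" "1 - W j"] a1 \<open>0 < 1 - W j\<close> by simp
    then have "(1 - W j) / of_nat (a (Suc j)) \<le> 1 - W j"
      using a1 by (simp add: divide_le_eq)
    then show ?case using \<open>0 < 1 - W j\<close> \<open>1 - W j < 1\<close> a1 by (auto simp: W_def)
  qed
  have Wr: "j \<in> {1..n} \<Longrightarrow> of_nat (a j) * W j + W (j - 1) = 1" for j
  proof -
    assume j: "j \<in> {1..n}"
    then obtain k where k: "j = Suc k" by (cases j) auto
    have "a j \<noteq> 0" using a_pos j by force
    then show ?thesis using k by (simp add: W_def)
  qed
  show ?thesis
  proof (intro exI[of _ W] conjI allI impI ballI)
    show "W 0 = of_nat s0 / of_nat t0" by (simp add: W_def x0_def)
  next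
    fix j assume "j \<in> {1..n}" then show "0 < W j" "W j < 1" "of_nat (a j) * W j + W (j - 1) = 1"
      using W Wr by auto
  next
    fix w' :: "nat \<Rightarrow> rat" and j assume h: "w' 0 = of_nat s0 / of_nat t0 \<and>
            (\<forall>j\<in>{1..n}. 0 < w' j \<and> w' j < 1 \<and> of_nat (a j) * w' j + w' (j - 1) = 1)"
      and j: "j \<in> {1..n}"
    have "k \<le> n \<Longrightarrow> w' k = W k" for k
    proof (induction k)
      case 0 then show ?case using h by (simp add: W_def x0_def)
    next
      case (Suc k)
      have m: "Suc k \<in> {1..n}" using Suc.prems by simp
      have e: "of_nat (a (Suc k)) * w' (Suc k) + w' k = 1" using h m by (metis diff_Suc_1)
      have "a (Suc k) \<noteq> 0" using a_pos m by force
      then have "(of_nat (a (Suc k)) :: rat) \<noteq> 0" by simp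
      with e have "w' (Suc k) = (1 - w' k) / of_nat (a (Suc k))" by (simp add: field_simps)
      then show ?case using Suc by (simp add: W_def)
    qed
    then show "w' j = W j" using j by simp
  qed
qed



lemma part2_num:
  fixes n :: nat and a :: "nat \<Rightarrow> nat" and s0 t0 :: nat and w :: "nat \<Rightarrow> rat" and s t :: "nat \<Rightarrow> nat"
  assumes a_pos: "\<forall>j\<in>{1..n}. 1 \<le> a j"
    and s0_pos: "1 \<le> s0"
    and st0: "s0 < t0"
    and cop0: "coprime s0 t0"
    and w0: "w 0 = of_nat s0 / of_nat t0"
    and wr: "\<forall>j\<in>{1..n}. 0 < w j \<and> w j < 1 \<and> of_nat (a j) * w j + w (j - 1) = 1"
    and s0d: "s 0 = s0" and t0d: "t 0 = t0"
    and rep: "\<forall>j\<in>{1..n}. 0 < t j \<and> coprime (s j) (t j) \<and> w j = of_nat (s j) / of_nat (t j)"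
  shows "\<forall>j\<le>n. 0 < t j \<and> 0 < s j \<and> s j < t j \<and> coprime (s j) (t j) \<and> w j = of_nat (s j) / of_nat (t j)"
    and "\<forall>j\<in>{1..n}. s j = (t (j-1) - s (j-1)) div gcd (t (j - 1) - s (j - 1)) (a j)
            \<and> t j = (a j div gcd (t (j - 1) - s (j - 1)) (a j)) * t (j - 1)"
proof -
  show basic: "\<forall>j\<le>n. 0 < t j \<and> 0 < s j \<and> s j < t j \<and> coprime (s j) (t j) \<and> w j = of_nat (s j) / of_nat (t j)"
  proof (intro allI impI)
    fix j assume j: "j \<le> n"
    show "0 < t j \<and> 0 < s j \<and> s j < t j \<and> coprime (s j) (t j) \<and> w j = of_nat (s j) / of_nat (t j)"
    proof (cases "j = 0")
      case True then show ?thesis using s0d t0d s0_pos st0 cop0 w0 by auto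
    next
      case False
      then have jj: "j \<in> {1..n}" using j by auto
      then have h: "0 < t j" "coprime (s j) (t j)" "w j = of_nat (s j) / of_nat (t j)" "0 < w j" "w j < 1"
        using rep wr by auto
      then have "0 < s j" by (auto intro: Nat.gr0I)
      moreover have "s j < t j" using h by (simp add: divide_less_eq)
      ultimately show ?thesis using h by auto
    qed
  qed
  show "\<forall>j\<in>{1..n}. s j = (t (j-1) - s (j-1)) div gcd (t (j - 1) - s (j - 1)) (a j)
            \<and> t j = (a j div gcd (t (j - 1) - s (j - 1)) (a j)) * t (j - 1)"
  proof
    fix j assume jj: "j \<in> {1..n}"
    have b: "0 < t (j-1)" "s (j-1) < t (j-1)" "coprime (s (j-1)) (t (j-1))"
        "w (j-1) = of_nat (s (j-1)) / of_nat (t (j-1))" using basic jj by auto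
    have h: "0 < t j" "coprime (s j) (t j)" "w j = of_nat (s j) / of_nat (t j)"
       "of_nat (a j) * w j + w (j - 1) = 1" "1 \<le> a j"
      using rep wr a_pos jj by auto
    show "s j = (t (j-1) - s (j-1)) div gcd (t (j - 1) - s (j - 1)) (a j)
            \<and> t j = (a j div gcd (t (j - 1) - s (j - 1)) (a j)) * t (j - 1)"
      by (rule step_frac) (use b h in auto)
  qed
qed



lemma smult_smult: "gr_smult c (gr_smult d f) = gr_smult (c * d) f"
  by (simp add: gr_smult_def fun_eq_iff)

lemma part2:
  fixes n :: nat and a :: "nat \<Rightarrow> nat" and s0 t0 :: nat and w :: "nat \<Rightarrow> rat" and s t :: "nat \<Rightarrow> nat"
  assumes n_pos: "1 \<le> n"
    and a_pos: "\<forall>j\<in>{1..n}. 1 \<le> a j"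
    and s0_pos: "1 \<le> s0"
    and st0: "s0 < t0"
    and cop0: "coprime s0 t0"
    and w0: "w 0 = of_nat s0 / of_nat t0"
    and wr: "\<forall>j\<in>{1..n}. 0 < w j \<and> w j < 1 \<and> of_nat (a j) * w j + w (j - 1) = 1"
    and s0d: "s 0 = s0" and t0d: "t 0 = t0"
    and rep: "\<forall>j\<in>{1..n}. 0 < t j \<and> coprime (s j) (t j) \<and> w j = of_nat (s j) / of_nat (t j)"
  shows "let \<beta> = (\<lambda>j. gcd (t (j - 1) - s (j - 1)) (a j));
             \<alpha> = (\<lambda>j. a j div \<beta> j)
         in
         (\<forall>j\<in>{1..n}.
            (of_nat (s j) :: rat) =
              of_int (rho (map (\<lambda>i. int (a i)) (rev [1..<j])) * int t0 + (-1)^j * int s0)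
              / of_nat (\<Prod>i=1..j. \<beta> i)
          \<and> t j = \<alpha> j * t (j - 1)
          \<and> t j = (\<Prod>i=1..j. \<alpha> i) * t0)
         \<and>
         gr_prod (\<lambda>j. gr_smult (1 / of_nat (s j)) (Lambda (t j)) - Lambda 1) n =
           gr_smult ((-1)^n) (Lambda 1)
           + (\<Sum>j=1..n. gr_smult ((-1)^(n - j) * of_nat (\<Prod>i=1..j. \<beta> i)
                                     / (of_nat t0 - of_nat s0)) (Lambda (t j)))
         \<and>
         gr_prod (\<lambda>j. gr_smult (1 / of_nat (s j)) (Lambda (t j)) - Lambda 1) n =
           gr_smult ((-1)^n) (E 1)
           + (\<Sum>j=1..n. gr_smult ((-1)^(n - j) * of_nat (\<Prod>i=1..j. a i)
                                     / (1 - w 0)) (E (t j)))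
         \<and>
         (\<Prod>j=1..n. 1 / w j - 1) =
           (of_int (rho (map (\<lambda>i. int (a i)) (rev [1..<n+1]))) + (-1)^(n - 1) * w 0)
           / (1 - w 0)"
proof -
  note basic = part2_num(1)[OF a_pos s0_pos st0 cop0 w0 wr s0d t0d rep]
  note stepf = part2_num(2)[OF a_pos s0_pos st0 cop0 w0 wr s0d t0d rep]
  define \<beta> where "\<beta> = (\<lambda>j. gcd (t (j - 1) - s (j - 1)) (a j))"
  define \<alpha> where "\<alpha> = (\<lambda>j. a j div \<beta> j)"
  define B where "B = (\<lambda>j. \<Prod>i=1..j. \<beta> i)"
  define A where "A = (\<lambda>j. \<Prod>i=1..j. a i)"
  define R where "R = (\<lambda>j. rho (map (\<lambda>i. int (a i)) (rev [1..<Suc j])))"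
  have R0: "R 0 = 1" by (simp add: R_def rho_Nil)
  have RS: "R (Suc j) = int (A (Suc j)) - R j" for j
    unfolding R_def A_def of_nat_prod by (rule R_Suc)
  have bpos: "0 < \<beta> j \<and> \<beta> j dvd a j \<and> \<beta> j dvd t (j-1) - s (j-1)" if "j \<in> {1..n}" for j
  proof -
    have "1 \<le> a j" using a_pos that by blast
    then show ?thesis by (auto simp: \<beta>_def)
  qed
  have ab: "\<alpha> j * \<beta> j = a j" if "j \<in> {1..n}" for j
    using bpos[OF that] by (simp add: \<alpha>_def)
  have sj: "s j * \<beta> j = t (j-1) - s (j-1)" if "j \<in> {1..n}" for j
    using stepf that bpos[OF that] by (simp add: \<beta>_def)
  have tj: "t j = \<alpha> j * t (j-1)" if "j \<in> {1..n}" for j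
    using stepf that by (simp add: \<beta>_def \<alpha>_def)
  have B0: "B 0 = 1" and A0: "A 0 = 1" by (simp_all add: B_def A_def)
  have BS: "B (Suc j) = B j * \<beta> (Suc j)" and AS: "A (Suc j) = A j * a (Suc j)" for j
    by (simp_all add: B_def A_def prod.cl_ivl_Suc)
  have tB: "t j * B j = A j * t0" if "j \<le> n" for j
    using that
  proof (induction j)
    case 0 then show ?case by (simp add: B0 A0 t0d)
  next
    case (Suc j)
    then have m: "Suc j \<in> {1..n}" by simp
    have "t (Suc j) * B (Suc j) = (\<alpha> (Suc j) * \<beta> (Suc j)) * (t j * B j)"
      using tj[OF m] by (simp add: BS)
    also have "\<dots> = A (Suc j) * t0" using ab[OF m] Suc by (simp add: AS)
    finally show ?case .
  qed
  have sB: "int (s (Suc j) * B (Suc j)) = R j * int t0 + (-1)^Suc j * int s0" if "j < n" for j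
    using that
  proof (induction j)
    case 0
    have "s 1 * \<beta> 1 = t0 - s0" using sj[of 1] n_pos s0d t0d by simp
    then show ?case using st0 by (simp add: B_def R0 of_nat_diff)
  next
    case (Suc j)
    have m: "Suc (Suc j) \<in> {1..n}" using Suc.prems by simp
    have lt: "s (Suc j) < t (Suc j)" using basic Suc.prems by simp
    have "s (Suc (Suc j)) * B (Suc (Suc j)) = (t (Suc j) - s (Suc j)) * B (Suc j)"
      using sj[OF m] by (simp add: BS)
    then have "int (s (Suc (Suc j)) * B (Suc (Suc j))) = int (t (Suc j) * B (Suc j)) - int (s (Suc j) * B (Suc j))"
      using lt by (simp add: of_nat_diff algebra_simps)
    also have "\<dots> = int (A (Suc j)) * int t0 - (R j * int t0 + (-1)^Suc j * int s0)"
      using tB[of "Suc j"] Suc by simp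
    also have "\<dots> = R (Suc j) * int t0 + (-1)^Suc (Suc j) * int s0"
      by (simp add: RS algebra_simps)
    finally show ?case .
  qed
  have ta: "t j = (\<Prod>i=1..j. \<alpha> i) * t0" if "j \<le> n" for j
    using that
  proof (induction j)
    case 0 then show ?case by (simp add: t0d)
  next
    case (Suc j)
    then have m: "Suc j \<in> {1..n}" by simp
    show ?case using tj[OF m] Suc by (simp add: prod.cl_ivl_Suc)
  qed
  have Bpos: "0 < B j" if "j \<le> n" for j
    unfolding B_def using bpos that by (intro prod_pos) auto
  have first: "\<forall>j\<in>{1..n}.
            (of_nat (s j) :: rat) =
              of_int (rho (map (\<lambda>i. int (a i)) (rev [1..<j])) * int t0 + (-1)^j * int s0)
              / of_nat (\<Prod>i=1..j. \<beta> i)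
          \<and> t j = \<alpha> j * t (j - 1)
          \<and> t j = (\<Prod>i=1..j. \<alpha> i) * t0"
  proof
    fix j assume j: "j \<in> {1..n}"
    then obtain k where k: "j = Suc k" "k < n" by (cases j) auto
    have e1: "rho (map (\<lambda>i. int (a i)) (rev [1..<j])) = R k" by (simp add: R_def k)
    have e2: "(of_int (R k * int t0 + (-1)^j * int s0) :: rat) = of_nat (s j * B j)"
      using sB[OF k(2)] k(1) by (metis of_int_of_nat_eq)
    have Bj: "(\<Prod>i=1..j. \<beta> i) = B j" by (simp add: B_def)
    have e3: "(of_nat (s j) :: rat) = of_nat (s j * B j) / of_nat (B j)"
      using Bpos[of j] j by simp
    have "(of_nat (s j) :: rat) =
              of_int (rho (map (\<lambda>i. int (a i)) (rev [1..<j])) * int t0 + (-1)^j * int s0)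
              / of_nat (\<Prod>i=1..j. \<beta> i)"
      unfolding e1 Bj e2 by (rule e3)
    then show "(of_nat (s j) :: rat) =
              of_int (rho (map (\<lambda>i. int (a i)) (rev [1..<j])) * int t0 + (-1)^j * int s0)
              / of_nat (\<Prod>i=1..j. \<beta> i)
          \<and> t j = \<alpha> j * t (j - 1)
          \<and> t j = (\<Prod>i=1..j. \<alpha> i) * t0"
      using tj[OF j] ta[of j] j by simp
  qed
  have t0pos: "0 < t0" using st0 by simp
  have AW: "of_nat (A k) * w k = of_int (R (k - 1)) + (-1)^k * w 0" if k: "k \<in> {1..n}" for k
  proof -
    obtain k' where k': "k = Suc k'" "k' < n" using k by (cases k) auto
    have tk: "0 < t k" and wk: "w k = of_nat (s k) / of_nat (t k)" using basic k by auto
    have h1: "(of_nat (A k) :: rat) * of_nat t0 = of_nat (t k) * of_nat (B k)"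
      using tB[of k] k by (metis atLeastAtMost_iff of_nat_mult)
    have "(of_int (int (s k * B k)) :: rat) = of_int (R k' * int t0 + (-1)^k * int s0)"
      using sB[OF k'(2)] k'(1) by simp
    then have h2: "(of_nat (s k) :: rat) * of_nat (B k) = of_int (R k') * of_nat t0 + (-1)^k * of_nat s0"
      by simp
    have "of_nat (A k) * w k * of_nat t0 = (of_nat (A k) * of_nat t0) * of_nat (s k) / of_nat (t k)"
      by (simp add: wk)
    also have "\<dots> = of_nat (s k) * of_nat (B k)" using tk by (simp add: h1)
    also have "\<dots> = of_int (R k') * of_nat t0 + (-1)^k * of_nat s0" by (rule h2)
    also have "\<dots> = (of_int (R (k - 1)) + (-1)^k * w 0) * of_nat t0"
      using t0pos k'(1) by (simp add: w0 field_simps)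
    finally show ?thesis using t0pos by simp
  qed
  have w0lt: "w 0 < 1" using w0 st0 by (simp add: divide_less_eq)
  have PP: "(\<Prod>j=1..k. 1 / w j - 1) = of_nat (A k) * (1 - w k) / (1 - w 0)" if "k \<le> n" for k
    using that
  proof (induction k)
    case 0 then show ?case using w0lt by (simp add: A0)
  next
    case (Suc k)
    then have m: "Suc k \<in> {1..n}" by simp
    have hh: "0 < w (Suc k) \<and> w (Suc k) < 1 \<and> of_nat (a (Suc k)) * w (Suc k) + w (Suc k - 1) = 1"
      using wr m by blast
    then have e: "1 - w k = of_nat (a (Suc k)) * w (Suc k)" and wp: "0 < w (Suc k)"
      by (auto simp: algebra_simps)
    have "(\<Prod>j=1..Suc k. 1 / w j - 1) = of_nat (A k) * (1 - w k) / (1 - w 0) * (1 / w (Suc k) - 1)"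
      using Suc by (simp add: prod.cl_ivl_Suc)
    also have "\<dots> = of_nat (A (Suc k)) * (1 - w (Suc k)) / (1 - w 0)"
      unfolding e AS using wp w0lt by (simp add: field_simps)
    finally show ?case .
  qed
  have last: "(\<Prod>j=1..n. 1 / w j - 1) =
           (of_int (rho (map (\<lambda>i. int (a i)) (rev [1..<n+1]))) + (-1)^(n - 1) * w 0)
           / (1 - w 0)"
  proof -
    obtain n' where n': "n = Suc n'" using n_pos by (cases n) auto
    have "of_nat (A n) * (1 - w n) = of_nat (A n) - (of_int (R n') + (-1)^n * w 0)"
      using AW[of n] n' by (simp add: algebra_simps)
    also have "\<dots> = of_int (R n) + (-1)^(n - 1) * w 0"
      using RS[of n'] n' by simp
    finally show ?thesis using PP[of n] by (simp add: R_def)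
  qed
  have tpos: "0 < t j" if "j \<le> n" for j using basic that by auto
  have tdvd: "t j dvd t k" if "j \<le> k" "k \<le> n" for j k
    using that
  proof (induction k)
    case 0 then show ?case by simp
  next
    case (Suc k)
    show ?case
    proof (cases "j = Suc k")
      case True then show ?thesis by simp
    next
      case False
      then have "t j dvd t k" using Suc by simp
      moreover have "t (Suc k) = \<alpha> (Suc k) * t k" using tj[of "Suc k"] Suc.prems by simp
      ultimately show ?thesis by simp
    qed
  qed
  define d where "d = (\<lambda>k j. (-1)^(k - j) * of_nat (B j) / (of_nat t0 - of_nat s0) :: rat)"
  define F where "F = (\<lambda>k. gr_smult ((-1)^k) (ch 1) + (\<Sum>j=1..k. gr_smult (d k j) (ch (t j))))"
  have Fapp: "F k z = (-1)^k * ch 1 z + (\<Sum>j=1..k. d k j * ch (t j) z)" for k z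
    by (simp add: F_def fun_sum_apply gr_smult_def)
  have ch_zero: "ch m z = 0" if "z ^ M \<noteq> 1" "m dvd M" for m M z
    using that by (auto simp: ch_def power_mult elim!: dvdE)
  have supp: "supp_in (F k) M" if "k \<le> n" "\<forall>j\<le>k. t j dvd M" for k M
    unfolding supp_in_def
  proof (intro allI impI)
    fix z :: complex assume z: "z ^ M \<noteq> 1"
    have "ch 1 z = 0" by (rule ch_zero[OF z]) simp
    moreover have "ch (t j) z = 0" if "j \<in> {1..k}" for j
      by (rule ch_zero[OF z]) (use that \<open>\<forall>j\<le>k. t j dvd M\<close> in auto)
    ultimately show "F k z = 0" by (simp add: Fapp)
  qed
  have mass: "(\<Sum>x\<in>{x. x^M = 1}. F k x) = (-1)^k + (\<Sum>j=1..k. d k j * of_nat (t j))"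
    if "k \<le> n" "0 < M" "\<forall>j\<le>k. t j dvd M" for k M
  proof -
    have "(\<Sum>x\<in>{x. x^M = 1}. F k x) = (-1)^k * (\<Sum>x\<in>{x. x^M = 1}. ch 1 x)
        + (\<Sum>j=1..k. d k j * (\<Sum>x\<in>{x. x^M = 1}. ch (t j) x))"
      by (simp add: Fapp sum.distrib sum_distrib_left, rule sum.swap)
    also have "\<dots> = (-1)^k + (\<Sum>j=1..k. d k j * of_nat (t j))"
      using that by (simp add: mass_ch)
    finally show ?thesis .
  qed
  have Q: "(-1)^k * (of_nat t0 - of_nat s0) + (\<Sum>j=1..k. (-1)^(k - j) * of_nat (A j) * of_nat t0)
        = (of_int (R k) * of_nat t0 + (-1)^(Suc k) * of_nat s0 :: rat)" for k
  proof (induction k)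
    case 0 then show ?case by (simp add: R0)
  next
    case (Suc k)
    have c: "(\<Sum>j=1..k. (-1)^(Suc k - j) * of_nat (A j) * (of_nat t0::rat))
        = (\<Sum>j=1..k. - ((-1)^(k - j) * of_nat (A j) * of_nat t0))"
      by (rule sum.cong) (auto simp: Suc_diff_le)
    have "(\<Sum>j=1..Suc k. (-1)^(Suc k - j) * of_nat (A j) * of_nat t0)
        = - (\<Sum>j=1..k. (-1)^(k - j) * of_nat (A j) * (of_nat t0::rat)) + of_nat (A (Suc k)) * of_nat t0"
      using c by (simp add: sum_negf)
    then show ?case using Suc by (simp add: RS algebra_simps)
  qed
  define X where "X = (\<lambda>j. gr_smult (1 / of_nat (s j)) (Lambda (t j)) - Lambda 1)"
  have L1: "Lambda 1 = ch 1" by (rule Lambda_ch) simp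
  have st0r: "(0::rat) < of_nat t0 - of_nat s0" using st0 by simp
  have main: "gr_prod X k = F k" if "k \<le> n" for k
    using that
  proof (induction k)
    case 0
    show ?case by (simp add: F_def basis1 gr_smult_def)
  next
    case (Suc k)
    define T where "T = t (Suc k)"
    have m: "Suc k \<in> {1..n}" using Suc.prems by simp
    have Tpos: "0 < T" using tpos Suc.prems by (simp add: T_def)
    have spos: "0 < s (Suc k)" using basic Suc.prems by simp
    have dv: "\<forall>j\<le>k. t j dvd T" using tdvd Suc.prems by (simp add: T_def)
    have sup: "supp_in (F k) T" using supp[of k T] dv Suc.prems by simp
    define M where "M = (-1)^k + (\<Sum>j=1..k. d k j * of_nat (t j))"
    have mM: "(\<Sum>x\<in>{x. x^T = 1}. F k x) = M"
      unfolding M_def using mass[of k T] Suc.prems Tpos dv by simp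
    have XS: "X (Suc k) = gr_smult (1 / of_nat (s (Suc k))) (ch T) - ch 1"
      using Lambda_ch[OF Tpos] L1 by (simp add: X_def T_def)
    have "gr_prod X (Suc k) = gr_smult (1 / of_nat (s (Suc k))) (gr_smult M (ch T)) - F k"
      using Suc mult_ch1[OF Tpos sup] by (simp add: XS mult_lin mult_ch[OF Tpos sup] mM)
    also have "\<dots> = F (Suc k)"
    proof
      fix z :: complex
      have "M * (of_nat t0 - of_nat s0) = (-1)^k * (of_nat t0 - of_nat s0) + (\<Sum>j=1..k. (-1)^(k - j) * of_nat (A j) * of_nat t0)"
      proof -
        have "(\<Sum>j=1..k. d k j * of_nat (t j)) * (of_nat t0 - of_nat s0)
            = (\<Sum>j=1..k. (-1)^(k - j) * of_nat (A j) * of_nat t0)"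
          unfolding sum_distrib_right
        proof (rule sum.cong)
          fix j assume "j \<in> {1..k}"
          then have "t j * B j = A j * t0" using tB Suc.prems by simp
          then have "(of_nat (B j) :: rat) * of_nat (t j) = of_nat (A j) * of_nat t0"
            by (metis mult.commute of_nat_mult)
          moreover have "d k j * of_nat (t j) * (of_nat t0 - of_nat s0) = (-1)^(k - j) * (of_nat (B j) * of_nat (t j))"
            using st0r by (simp add: d_def)
          ultimately show "d k j * of_nat (t j) * (of_nat t0 - of_nat s0) = (-1)^(k - j) * of_nat (A j) * of_nat t0"
            by simp
        qed simp
        then show ?thesis by (simp add: M_def algebra_simps)
      qed
      also have "\<dots> = of_nat (s (Suc k) * B (Suc k))"
      proof -
        have "(of_int (int (s (Suc k) * B (Suc k))) :: rat) = of_int (R k * int t0 + (-1)^Suc k * int s0)"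
          using sB[of k] Suc.prems by simp
        then have "(of_nat (s (Suc k) * B (Suc k)) :: rat) = of_int (R k) * of_nat t0 + (-1)^Suc k * of_nat s0"
          by simp
        then show ?thesis using Q[of k] by simp
      qed
      finally have "M = of_nat (s (Suc k)) * of_nat (B (Suc k)) / (of_nat t0 - of_nat s0)"
        using st0r by (simp add: field_simps)
      then have cM: "1 / of_nat (s (Suc k)) * M = d (Suc k) (Suc k)"
        using spos by (simp add: d_def)
      have dd: "d (Suc k) j = - d k j" if "j \<in> {1..k}" for j
        using that by (simp add: d_def Suc_diff_le)
      have "F (Suc k) z = (-1)^Suc k * ch 1 z + (\<Sum>j=1..k. d (Suc k) j * ch (t j) z) + d (Suc k) (Suc k) * ch T z"
        by (simp add: Fapp T_def)
      also have "\<dots> = 1 / of_nat (s (Suc k)) * M * ch T z - F k z"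
        by (simp add: cM[symmetric] dd Fapp sum_negf)
      finally show "(gr_smult (1 / of_nat (s (Suc k))) (gr_smult M (ch T)) - F k) z = F (Suc k) z"
        by (simp add: gr_smult_def)
    qed
    finally show ?case .
  qed
  have Fn: "gr_prod X n = F n" using main by simp
  have LT: "Lambda (t j) = ch (t j)" if "j \<in> {1..n}" for j
    using Lambda_ch[of "t j"] tpos[of j] that by simp
  have G1: "gr_prod (\<lambda>j. gr_smult (1 / of_nat (s j)) (Lambda (t j)) - Lambda 1) n =
           gr_smult ((-1)^n) (Lambda 1)
           + (\<Sum>j=1..n. gr_smult ((-1)^(n - j) * of_nat (\<Prod>i=1..j. \<beta> i)
                                     / (of_nat t0 - of_nat s0)) (Lambda (t j)))"
  proof -
    have "(\<Sum>j=1..n. gr_smult (d n j) (ch (t j))) = (\<Sum>j=1..n. gr_smult ((-1)^(n - j) * of_nat (\<Prod>i=1..j. \<beta> i)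
                                     / (of_nat t0 - of_nat s0)) (Lambda (t j)))"
      by (rule sum.cong) (simp_all add: LT d_def B_def)
    then have "F n = gr_smult ((-1)^n) (Lambda 1)
           + (\<Sum>j=1..n. gr_smult ((-1)^(n - j) * of_nat (\<Prod>i=1..j. \<beta> i)
                                     / (of_nat t0 - of_nat s0)) (Lambda (t j)))"
      using L1 by (simp add: F_def)
    then show ?thesis using Fn by (simp add: X_def)
  qed
  have E1: "E 1 = Lambda 1" by (simp add: E_def gr_smult_def)
  have G2: "gr_smult ((-1)^n) (E 1)
           + (\<Sum>j=1..n. gr_smult ((-1)^(n - j) * of_nat (\<Prod>i=1..j. a i)
                                     / (1 - w 0)) (E (t j)))
     = gr_smult ((-1)^n) (Lambda 1)
           + (\<Sum>j=1..n. gr_smult ((-1)^(n - j) * of_nat (\<Prod>i=1..j. \<beta> i)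
                                     / (of_nat t0 - of_nat s0)) (Lambda (t j)))"
  proof -
    have tm: "gr_smult ((-1)^(n - j) * of_nat (\<Prod>i=1..j. a i) / (1 - w 0)) (E (t j))
        = gr_smult ((-1)^(n - j) * of_nat (\<Prod>i=1..j. \<beta> i) / (of_nat t0 - of_nat s0)) (Lambda (t j))"
      if j: "j \<in> {1..n}" for j
    proof -
      have tj0: "0 < t j" using tpos j by simp
      have h: "(of_nat (A j) :: rat) * of_nat t0 = of_nat (t j) * of_nat (B j)"
        using tB[of j] j by (metis atLeastAtMost_iff of_nat_mult)
      have "(-1)^(n - j) * of_nat (A j) / (1 - w 0) * (1 / of_nat (t j))
          = (-1)^(n - j) * (of_nat (A j) * of_nat t0) / ((of_nat t0 - of_nat s0) * of_nat (t j))"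
        using t0pos st0r by (simp add: w0 field_simps)
      also have "\<dots> = (-1)^(n - j) * of_nat (B j) / (of_nat t0 - of_nat s0)"
        unfolding h using tj0 by simp
      finally have c: "(-1)^(n - j) * of_nat (A j) / (1 - w 0) * (1 / of_nat (t j))
          = (-1)^(n - j) * of_nat (B j) / (of_nat t0 - of_nat s0)" .
      show ?thesis
        unfolding E_ch[OF tj0] LT[OF j] smult_smult
        using c by (simp add: A_def B_def)
    qed
    have S: "(\<Sum>j=1..n. gr_smult ((-1)^(n - j) * of_nat (\<Prod>i=1..j. a i)
                                     / (1 - w 0)) (E (t j)))
      = (\<Sum>j=1..n. gr_smult ((-1)^(n - j) * of_nat (\<Prod>i=1..j. \<beta> i)
                                     / (of_nat t0 - of_nat s0)) (Lambda (t j)))"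
      by (rule sum.cong[OF refl tm])
    show ?thesis unfolding E1 S by (rule refl)
  qed
  have mainP: "(\<forall>j\<in>{1..n}.
            (of_nat (s j) :: rat) =
              of_int (rho (map (\<lambda>i. int (a i)) (rev [1..<j])) * int t0 + (-1)^j * int s0)
              / of_nat (\<Prod>i=1..j. \<beta> i)
          \<and> t j = \<alpha> j * t (j - 1)
          \<and> t j = (\<Prod>i=1..j. \<alpha> i) * t0)
         \<and>
         gr_prod (\<lambda>j. gr_smult (1 / of_nat (s j)) (Lambda (t j)) - Lambda 1) n =
           gr_smult ((-1)^n) (Lambda 1)
           + (\<Sum>j=1..n. gr_smult ((-1)^(n - j) * of_nat (\<Prod>i=1..j. \<beta> i)
                                     / (of_nat t0 - of_nat s0)) (Lambda (t j)))
         \<and>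
         gr_prod (\<lambda>j. gr_smult (1 / of_nat (s j)) (Lambda (t j)) - Lambda 1) n =
           gr_smult ((-1)^n) (E 1)
           + (\<Sum>j=1..n. gr_smult ((-1)^(n - j) * of_nat (\<Prod>i=1..j. a i)
                                     / (1 - w 0)) (E (t j)))
         \<and>
         (\<Prod>j=1..n. 1 / w j - 1) =
           (of_int (rho (map (\<lambda>i. int (a i)) (rev [1..<n+1]))) + (-1)^(n - 1) * w 0)
           / (1 - w 0)"
    by (rule conjI[OF first conjI[OF G1 conjI[OF trans[OF G1 G2[symmetric]] last]]])
  show ?thesis using mainP unfolding Let_def \<alpha>_def \<beta>_def .
qed
theorem lemma4p2:
  fixes n :: nat and a :: "nat \<Rightarrow> nat" and s0 t0 :: nat
  assumes n_pos: "1 \<le> n"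
    and a_pos: "\<forall>j\<in>{1..n}. 1 \<le> a j"
    and s0_pos: "1 \<le> s0"
    and st0: "s0 < t0"
    and cop0: "coprime s0 t0"
  shows
    "(\<exists>w :: nat \<Rightarrow> rat. w 0 = of_nat s0 / of_nat t0 \<and>
        (\<forall>j\<in>{1..n}. 0 < w j \<and> w j < 1 \<and> of_nat (a j) * w j + w (j - 1) = 1) \<and>
        (\<forall>w' :: nat \<Rightarrow> rat. (w' 0 = of_nat s0 / of_nat t0 \<and>
            (\<forall>j\<in>{1..n}. 0 < w' j \<and> w' j < 1 \<and> of_nat (a j) * w' j + w' (j - 1) = 1))
          \<longrightarrow> (\<forall>j\<in>{1..n}. w' j = w j)))
     \<and>
     (\<forall>(w :: nat \<Rightarrow> rat) (s :: nat \<Rightarrow> nat) (t :: nat \<Rightarrow> nat).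
        (w 0 = of_nat s0 / of_nat t0 \<and>
         (\<forall>j\<in>{1..n}. 0 < w j \<and> w j < 1 \<and> of_nat (a j) * w j + w (j - 1) = 1) \<and>
         s 0 = s0 \<and> t 0 = t0 \<and>
         (\<forall>j\<in>{1..n}. 0 < t j \<and> coprime (s j) (t j) \<and> w j = of_nat (s j) / of_nat (t j)))
        \<longrightarrow>
        (let \<beta> = (\<lambda>j. gcd (t (j - 1) - s (j - 1)) (a j));
             \<alpha> = (\<lambda>j. a j div \<beta> j)
         in
         (\<forall>j\<in>{1..n}.
            (of_nat (s j) :: rat) =
              of_int (rho (map (\<lambda>i. int (a i)) (rev [1..<j])) * int t0 + (-1)^j * int s0)
              / of_nat (\<Prod>i=1..j. \<beta> i)
          \<and> t j = \<alpha> j * t (j - 1)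
          \<and> t j = (\<Prod>i=1..j. \<alpha> i) * t0)
         \<and>
         gr_prod (\<lambda>j. gr_smult (1 / of_nat (s j)) (Lambda (t j)) - Lambda 1) n =
           gr_smult ((-1)^n) (Lambda 1)
           + (\<Sum>j=1..n. gr_smult ((-1)^(n - j) * of_nat (\<Prod>i=1..j. \<beta> i)
                                     / (of_nat t0 - of_nat s0)) (Lambda (t j)))
         \<and>
         gr_prod (\<lambda>j. gr_smult (1 / of_nat (s j)) (Lambda (t j)) - Lambda 1) n =
           gr_smult ((-1)^n) (E 1)
           + (\<Sum>j=1..n. gr_smult ((-1)^(n - j) * of_nat (\<Prod>i=1..j. a i)
                                     / (1 - w 0)) (E (t j)))
         \<and>
         (\<Prod>j=1..n. 1 / w j - 1) =
           (of_int (rho (map (\<lambda>i. int (a i)) (rev [1..<n+1]))) + (-1)^(n - 1) * w 0)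
           / (1 - w 0)))"
    apply (rule conjI)
   apply (rule part1[OF a_pos s0_pos st0])
  apply (intro allI impI)
  apply (elim conjE)
  apply (rule part2[OF n_pos a_pos s0_pos st0 cop0])
      apply assumption+
  done

end
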